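(* Suppose $(Y,y_0)$ is sequentially $0$-connected and $(X,x_0)$ is well-pointed, i.e. $\{x_0\}\to X$ is a cofibration. Then every sequence $\{f_k\}_{k\in\mathbb{N}}$ of (unbased) maps $X\to Y$ that converges to $y_0$ is sequentially homotopic to a sequence $\{g_k\}_{k\in\mathbb{N}}$ of based maps $(X,x_0)\to(Y,y_0)$ that converges to $y_0$.
   Context: All spaces Hausdorff. A sequence of maps $\{f_k\}$ into $Y$ converges to $y_0$ if for every neighborhood $U$ of $y_0$, $\operatorname{Im}(f_k)\subseteq U$ for all but finitely many $k$. Sequences $\{f_k\},\{g_k\}$ converging to $y_0$ are sequentially homotopic if there are free homotopies $H_k$ from $f_k$ to $g_k$ with $\{H_k\}$ converging to $y_0$. $(Y,y_0)$ is sequentially $0$-connected if the set of based homotopy classes $[(\mathbb{H}_0,0),(Y,y_0)]$ is a singleton, where $\mathbb{H}_0=\{0\}\cup\{1/m:m\in\mathbb{N}\}\subseteq\mathbb{R}$ with basepoint $0$. *)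

theory Defs
  imports "HOL-Analysis.Analysis"
begin

definition H0 :: "real set" where
  "H0 = {0} \<union> {1 / real m | m. m \<ge> 1}"

definition map_seq_converges :: "'c topology \<Rightarrow> 'b topology \<Rightarrow> (nat \<Rightarrow> 'c \<Rightarrow> 'b) \<Rightarrow> 'b \<Rightarrow> bool" where
  "map_seq_converges Z Y fs y0 \<longleftrightarrow>
     (\<forall>U. openin Y U \<and> y0 \<in> U \<longrightarrow> eventually (\<lambda>k. fs k ` topspace Z \<subseteq> U) sequentially)"

definition seq_homotopic :: "'a topology \<Rightarrow> 'b topology \<Rightarrow> (nat \<Rightarrow> 'a \<Rightarrow> 'b) \<Rightarrow> (nat \<Rightarrow> 'a \<Rightarrow> 'b) \<Rightarrow> 'b \<Rightarrow> bool" where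
  "seq_homotopic X Y f g y0 \<longleftrightarrow>
     (\<exists>H :: nat \<Rightarrow> 'a \<times> real \<Rightarrow> 'b.
        (\<forall>k. continuous_map (prod_topology X (top_of_set {0..(1::real)})) Y (H k)
             \<and> (\<forall>x\<in>topspace X. H k (x, 0) = f k x \<and> H k (x, 1) = g k x))
        \<and> map_seq_converges (prod_topology X (top_of_set {0..(1::real)})) Y H y0)"

definition based_maps :: "'c topology \<Rightarrow> 'c \<Rightarrow> 'b topology \<Rightarrow> 'b \<Rightarrow> ('c \<Rightarrow> 'b) set" where
  "based_maps Z z0 Y y0 = {f. continuous_map Z Y f \<and> f z0 = y0}"

definition based_homotopic :: "'c topology \<Rightarrow> 'c \<Rightarrow> 'b topology \<Rightarrow> 'b \<Rightarrow> ('c \<Rightarrow> 'b) \<Rightarrow> ('c \<Rightarrow> 'b) \<Rightarrow> bool" where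
  "based_homotopic Z z0 Y y0 f g \<longleftrightarrow>
     (\<exists>h. continuous_map (prod_topology Z (top_of_set {0..(1::real)})) Y h
        \<and> (\<forall>x\<in>topspace Z. h (x, 0) = f x \<and> h (x, 1) = g x)
        \<and> (\<forall>t\<in>{0..1}. h (z0, t) = y0))"

definition based_homotopy_classes :: "'c topology \<Rightarrow> 'c \<Rightarrow> 'b topology \<Rightarrow> 'b \<Rightarrow> ('c \<Rightarrow> 'b) set set" where
  "based_homotopy_classes Z z0 Y y0 =
     (\<lambda>f. {g \<in> based_maps Z z0 Y y0. based_homotopic Z z0 Y y0 f g}) ` based_maps Z z0 Y y0"

definition seq_0_connected :: "'b topology \<Rightarrow> 'b \<Rightarrow> bool" where
  "seq_0_connected Y y0 \<longleftrightarrow> is_singleton (based_homotopy_classes (top_of_set H0) 0 Y y0)"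

definition HEP_wrt :: "'c itself \<Rightarrow> 'a topology \<Rightarrow> 'a set \<Rightarrow> bool" where
  "HEP_wrt _ X A \<longleftrightarrow>
     (\<forall>(Z :: 'c topology) f h.
        continuous_map X Z f
        \<and> continuous_map (prod_topology (subtopology X A) (top_of_set {0..(1::real)})) Z h
        \<and> (\<forall>a\<in>A. h (a, 0) = f a)
        \<longrightarrow> (\<exists>H. continuous_map (prod_topology X (top_of_set {0..(1::real)})) Z H
               \<and> (\<forall>x\<in>topspace X. H (x, 0) = f x)
               \<and> (\<forall>a\<in>A. \<forall>t\<in>{0..1}. H (a, t) = h (a, t))))"

text \<open>Well-pointed: {x0} \<rightarrow> X is a cofibration (HEP w.r.t. all test spaces; test spaces
  with point type 'a \<times> real suffice, since they include X \<times> 0 \<union> {x0} \<times> I).\<close>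
definition well_pointed :: "'a topology \<Rightarrow> 'a \<Rightarrow> bool" where
  "well_pointed X x0 \<longleftrightarrow> x0 \<in> topspace X \<and> HEP_wrt TYPE('a \<times> real) X {x0}"

end

theory Submission
  imports Defs
begin

lemma H0_isolated:
  assumes m: "m \<ge> (1::nat)"
  shows "openin (top_of_set H0) {1 / real m}"
proof -
  define e where "e = 1 / (real m * (real m + 1))"
  have epos: "e > 0" using m by (simp add: e_def)
  have "H0 \<inter> ball (1 / real m) e = {1 / real m}"
  proof (intro equalityI subsetI)
    fix x assume x: "x \<in> H0 \<inter> ball (1 / real m) e"
    then have d: "\<bar>x - 1 / real m\<bar> < e" by (simp add: dist_real_def abs_minus_commute)
    from x consider "x = 0" | n where "n \<ge> 1" "x = 1 / real n" by (auto simp: H0_def)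
    then show "x \<in> {1 / real m}"
    proof cases
      case 1
      have "real m \<le> real m * (real m + 1)" using m by simp
      then have "1 / real m \<ge> e" unfolding e_def using m by (intro divide_left_mono) auto
      with d 1 show ?thesis by simp
    next
      case 2
      show ?thesis
      proof (cases n m rule: linorder_cases)
        case less
        then have "real n + 1 \<le> real m" by simp
        have n1: "real n \<ge> 1" using 2 by simp
        have eq: "1 / real n - 1 / real m = (real m - real n) / (real n * real m)"
          using n1 m by (simp add: field_simps)
        have "(real m - real n) / (real n * real m) \<ge> 1 / (real n * real m)"
          using less n1 m by (intro divide_right_mono) auto
        moreover have "real n * real m \<le> real m * (real m + 1)"
        proof -
          have "real n \<le> real m + 1" using less by simp
          then have "real m * real n \<le> real m * (real m + 1)" by (simp add: mult_left_mono)
          then show ?thesis by (simp add: mult.commute)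
        qed
        then have "1 / (real n * real m) \<ge> e" unfolding e_def using n1 m
          by (intro divide_left_mono) auto
        ultimately have "1 / real n - 1 / real m \<ge> e" using eq by linarith
        with d 2 show ?thesis by simp
      next
        case equal then show ?thesis using 2 by simp
      next
        case greater
        then have "real m + 1 \<le> real n" by simp
        then have "1 / real n \<le> 1 / (real m + 1)" using m by (intro divide_left_mono) auto
        moreover have "1 / real m - 1 / (real m + 1) = e" using m by (simp add: e_def field_simps)
        ultimately have "1 / real m - 1 / real n \<ge> e" by linarith
        with d 2 show ?thesis by simp
      qed
    qed
  next
    fix x assume "x \<in> {1 / real m}"
    then show "x \<in> H0 \<inter> ball (1 / real m) e" using m epos by (auto simp: H0_def)
  qed
  then show ?thesis by (metis open_ball openin_open_Int)
qed

lemma H0_seq_cont: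
  fixes y :: "nat \<Rightarrow> 'b"
  assumes yY: "\<forall>k. y k \<in> topspace Y" and y0: "y0 \<in> topspace Y"
    and conv: "\<forall>U. openin Y U \<and> y0 \<in> U \<longrightarrow> eventually (\<lambda>k. y k \<in> U) sequentially"
  shows "continuous_map (top_of_set H0) Y (\<lambda>s. if s = 0 then y0 else y (nat \<lfloor>1/s\<rfloor> - 1))"
  unfolding continuous_map_openin_preimage_eq
proof (intro conjI allI impI)
  show "(\<lambda>s. if s = 0 then y0 else y (nat \<lfloor>1/s\<rfloor> - 1)) \<in> topspace (top_of_set H0) \<rightarrow> topspace Y"
    using yY y0 by auto
next
  fix U assume U: "openin Y U"
  let ?p = "\<lambda>s. if s = 0 then y0 else y (nat \<lfloor>1/s\<rfloor> - 1)"
  show "openin (top_of_set H0) (topspace (top_of_set H0) \<inter> ?p -` U)"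
  proof (subst openin_subopen, intro ballI)
    fix s assume s: "s \<in> topspace (top_of_set H0) \<inter> ?p -` U"
    then have sH: "s \<in> H0" and sU: "?p s \<in> U" by auto
    show "\<exists>T. openin (top_of_set H0) T \<and> s \<in> T \<and> T \<subseteq> topspace (top_of_set H0) \<inter> ?p -` U"
    proof (cases "s = 0")
      case True
      then have "y0 \<in> U" using sU by simp
      with conv U obtain N where N: "\<And>k. k \<ge> N \<Longrightarrow> y k \<in> U"
        by (auto simp: eventually_sequentially)
      define T where "T = H0 \<inter> ball 0 (1 / (real N + 1))"
      have "T \<subseteq> topspace (top_of_set H0) \<inter> ?p -` U"
      proof
        fix x assume x: "x \<in> T"
        then have xH: "x \<in> H0" and xb: "\<bar>x\<bar> < 1 / (real N + 1)" by (auto simp: T_def)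
        from xH consider "x = 0" | n where "n \<ge> 1" "x = 1 / real n" by (auto simp: H0_def)
        then show "x \<in> topspace (top_of_set H0) \<inter> ?p -` U"
        proof cases
          case 1 then show ?thesis using xH \<open>y0 \<in> U\<close> by simp
        next
          case 2
          then have "1 / real n < 1 / (real N + 1)" using xb by simp
          have "real N + 1 < real n" 
          proof (rule ccontr)
            assume "\<not> real N + 1 < real n"
            then have "1 / (real N + 1) \<le> 1 / real n" using 2 by (intro divide_left_mono) auto
            then show False using \<open>1 / real n < 1 / (real N + 1)\<close> by simp
          qed
          then have "N \<le> n - 1" by linarith
          moreover have "nat \<lfloor>1 / x\<rfloor> = n" using 2 by simp
          ultimately show ?thesis using xH 2 N by auto
        qed
      qed
      moreover have "openin (top_of_set H0) T" unfolding T_def by (intro openin_open_Int) auto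
      moreover have "s \<in> T" using True sH by (simp add: T_def)
      ultimately show ?thesis by blast
    next
      case False
      then obtain m where m: "m \<ge> 1" "s = 1 / real m" using sH by (auto simp: H0_def)
      then show ?thesis using H0_isolated[OF m(1)] s by (intro exI[of _ "{s}"]) auto
    qed
  qed
qed

theorem proposition2p27:
  fixes X :: "'a topology" and Y :: "'b topology" and x0 :: 'a and y0 :: 'b
    and f :: "nat \<Rightarrow> 'a \<Rightarrow> 'b"
  assumes "Hausdorff_space X" and "Hausdorff_space Y"
    and "y0 \<in> topspace Y"
    and "seq_0_connected Y y0"
    and "well_pointed X x0"
    and "\<forall>k. continuous_map X Y (f k)"
    and "map_seq_converges X Y f y0"
  shows "\<exists>g :: nat \<Rightarrow> 'a \<Rightarrow> 'b.
           (\<forall>k. g k \<in> based_maps X x0 Y y0)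
           \<and> map_seq_converges X Y g y0
           \<and> seq_homotopic X Y f g y0"
proof -
  note HX = assms(1) and y0Y = assms(3) and s0 = assms(4) and fc = assms(6) and fconv = assms(7)
  have x0X: "x0 \<in> topspace X" and HEP: "HEP_wrt TYPE('a \<times> real) X {x0}"
    using assms(5) by (auto simp: well_pointed_def)
  define I where "I = top_of_set {0..(1::real)}"
  define XI where "XI = prod_topology X I"
  have tsI: "topspace I = {0..1}" by (simp add: I_def)
  have tsXI: "topspace XI = topspace X \<times> {0..1}" by (simp add: XI_def tsI)
  define A where "A = topspace X \<times> {0::real} \<union> {x0} \<times> {0..1}"
  have AXI: "A \<subseteq> topspace XI" using x0X by (auto simp: A_def tsXI)
  obtain r where rc: "continuous_map XI (subtopology XI A) r"
    and r0: "\<And>x. x \<in> topspace X \<Longrightarrow> r (x, 0) = (x, 0)"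
    and rx0: "\<And>t. t \<in> {0..1} \<Longrightarrow> r (x0, t) = (x0, t)"
  proof -
    have c1: "continuous_map X (subtopology XI A) (\<lambda>x. (x, 0::real))"
      unfolding XI_def
      by (intro continuous_map_into_subtopology) (auto simp: continuous_map_pairwise o_def I_def A_def)
    have c2: "continuous_map (prod_topology (subtopology X {x0}) (top_of_set {0..(1::real)})) (subtopology XI A) (\<lambda>p. p)"
    proof -
      have e: "prod_topology (subtopology X {x0}) (top_of_set {0..(1::real)}) = subtopology XI ({x0} \<times> topspace I)"
        unfolding XI_def I_def by (rule prod_topology_subtopology(1))
      show ?thesis unfolding e
        by (intro continuous_map_into_subtopology continuous_map_from_subtopology continuous_map_id[unfolded id_def])
           (auto simp: A_def tsI)
    qed
    from HEP[unfolded HEP_wrt_def, rule_format, of "subtopology XI A" "\<lambda>x. (x, 0::real)" "\<lambda>p. p"] c1 c2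
    obtain H where "continuous_map (prod_topology X (top_of_set {0..(1::real)})) (subtopology XI A) H"
      "\<forall>x\<in>topspace X. H (x, 0) = (x, 0)" "\<forall>t\<in>{0..1}. H (x0, t) = (x0, t)"
      by auto
    then show ?thesis using that[of H] by (auto simp: XI_def I_def)
  qed
  have rA: "\<And>z. z \<in> topspace XI \<Longrightarrow> r z \<in> A"
  proof -
    fix z assume "z \<in> topspace XI"
    then have "r z \<in> topspace (subtopology XI A)" using rc continuous_map_image_subset_topspace by blast
    then show "r z \<in> A" by simp
  qed
  define p where "p = (\<lambda>s::real. if s = 0 then y0 else f (nat \<lfloor>1/s\<rfloor> - 1) x0)"
  have fY: "\<And>k x. x \<in> topspace X \<Longrightarrow> f k x \<in> topspace Y"
    using fc by (auto dest: continuous_map_image_subset_topspace)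
  have pc: "continuous_map (top_of_set H0) Y p"
    unfolding p_def
  proof (rule H0_seq_cont)
    show "\<forall>k. f k x0 \<in> topspace Y" using fY x0X by auto
    show "y0 \<in> topspace Y" by (rule y0Y)
    show "\<forall>U. openin Y U \<and> y0 \<in> U \<longrightarrow> eventually (\<lambda>k. f k x0 \<in> U) sequentially"
    proof (intro allI impI)
      fix U assume "openin Y U \<and> y0 \<in> U"
      then have "eventually (\<lambda>k. f k ` topspace X \<subseteq> U) sequentially"
        using fconv unfolding map_seq_converges_def by blast
      then show "eventually (\<lambda>k. f k x0 \<in> U) sequentially"
        by (rule eventually_mono) (use x0X in blast)
    qed
  qed
  define c where "c = (\<lambda>s::real. y0)"
  have H00: "(0::real) \<in> H0" by (simp add: H0_def)
  have pb: "p \<in> based_maps (top_of_set H0) 0 Y y0" using pc by (simp add: based_maps_def p_def)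
  have cb: "c \<in> based_maps (top_of_set H0) 0 Y y0" using y0Y by (simp add: based_maps_def c_def)
  have cc: "based_homotopic (top_of_set H0) 0 Y y0 c c"
    unfolding based_homotopic_def c_def using y0Y by (intro exI[of _ "\<lambda>_. y0"]) auto
  let ?cl = "\<lambda>f. {g \<in> based_maps (top_of_set H0) 0 Y y0. based_homotopic (top_of_set H0) 0 Y y0 f g}"
  have "?cl p = ?cl c"
    using s0 pb cb unfolding seq_0_connected_def based_homotopy_classes_def is_singleton_def
    by (metis (no_types, lifting) image_eqI singletonD)
  then have "c \<in> ?cl p" using cc cb by blast
  then obtain h where hc: "continuous_map (prod_topology (top_of_set H0) I) Y h"
    and h0: "\<And>s. s \<in> H0 \<Longrightarrow> h (s, 0) = p s"
    and h1: "\<And>s. s \<in> H0 \<Longrightarrow> h (s, 1) = y0"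
    and hb: "\<And>t. t \<in> {0..1} \<Longrightarrow> h (0, t) = y0"
    unfolding based_homotopic_def c_def I_def by auto
  define \<alpha> where "\<alpha> = (\<lambda>k t. h (1 / real (Suc k), t))"
  have sH: "\<And>k. 1 / real (Suc k) \<in> H0"
  proof -
    fix k have "1 / real (Suc k) \<in> {1 / real m | m. m \<ge> 1}" by (intro CollectI exI[of _ "Suc k"]) simp
    then show "1 / real (Suc k) \<in> H0" unfolding H0_def by blast
  qed
  have \<alpha>c: "\<And>k. continuous_map I Y (\<alpha> k)"
  proof -
    fix k
    have "continuous_map I (prod_topology (top_of_set H0) I) (\<lambda>t. (1 / real (Suc k), t))"
      using sH[of k] by (auto simp: continuous_map_pairwise o_def)
    then have "continuous_map I Y (h \<circ> (\<lambda>t. (1 / real (Suc k), t)))"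
      using hc by (rule continuous_map_compose)
    then show "continuous_map I Y (\<alpha> k)"
      by (simp add: o_def \<alpha>_def)
  qed
  have \<alpha>0: "\<And>k. \<alpha> k 0 = f k x0"
    unfolding \<alpha>_def using h0[OF sH] by (simp add: p_def nat_add_distrib)
  have \<alpha>1: "\<And>k. \<alpha> k 1 = y0"
    unfolding \<alpha>_def using h1[OF sH] by simp
  have \<alpha>conv: "eventually (\<lambda>k. \<alpha> k ` {0..1} \<subseteq> U) sequentially"
    if U: "openin Y U" "y0 \<in> U" for U
  proof -
    define W where "W = {z \<in> topspace (prod_topology (top_of_set H0) I). h z \<in> U}"
    have W: "openin (prod_topology (top_of_set H0) I) W"
      unfolding W_def using hc U(1) by (rule openin_continuous_map_preimage)
    have "{0} \<times> {0..1} \<subseteq> W" using hb U(2) H00 by (auto simp: W_def tsI)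
    moreover have "compactin I {0..1}" by (simp add: I_def compactin_subtopology)
    ultimately obtain U' V where U': "openin (top_of_set H0) U'" "0 \<in> U'" "U' \<times> V \<subseteq> W"
      "{0..1} \<subseteq> V"
      using tube_lemma_right[OF W, of "{0..1}" 0] H00 by auto
    then obtain e where e: "e > 0" "\<And>x'. x' \<in> H0 \<Longrightarrow> dist x' 0 < e \<Longrightarrow> x' \<in> U'"
      unfolding openin_euclidean_subtopology_iff by blast
    obtain N where N: "1 / e < real N" using reals_Archimedean2 by blast
    show ?thesis unfolding eventually_sequentially
    proof (intro exI allI impI)
      fix k assume "N \<le> k"
      then have "1 / e < real (Suc k)" using N by simp
      then have "1 / real (Suc k) < e" using e(1) by (simp add: field_simps)
      then have "1 / real (Suc k) \<in> U'" using e(2)[OF sH] by simp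
      then show "\<alpha> k ` {0..1} \<subseteq> U" using U'(3,4) by (auto simp: \<alpha>_def W_def)
    qed
  qed
  define F where "F = (\<lambda>k z. if fst z = x0 then \<alpha> k (snd z) else f k (fst z))"
  define T where "T = (\<lambda>b. if b then {x0} \<times> {0..1::real} else topspace X \<times> {0})"
  have Tclo: "closedin XI (T b)" for b
  proof (cases b)
    case True
    have "closedin X {x0}" using HX x0X by (rule closedin_Hausdorff_singleton)
    moreover have "closedin I {0..1}" using closedin_topspace[of I] by (simp add: tsI)
    ultimately show ?thesis using True by (simp add: T_def XI_def closedin_prod_Times_iff)
  next
    case False
    have "closedin I {0}" unfolding I_def by (rule closed_subset) auto
    then show ?thesis using False by (simp add: T_def XI_def closedin_prod_Times_iff)
  qed
  have TA: "T b \<subseteq> A" for b by (auto simp: T_def A_def)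
  have Fc: "continuous_map (subtopology XI A) Y (F k)" for k
  proof (rule pasting_lemma_closed[where I = "{True, False}" and T = T
        and f = "\<lambda>b. if b then \<alpha> k \<circ> snd else f k \<circ> fst"])
    show "finite {True, False}" by simp
    fix b assume "b \<in> {True, False}"
    show "closedin (subtopology XI A) (T b)"
      using Tclo TA by (rule closedin_subset_topspace)
    have c1: "continuous_map XI Y (\<alpha> k \<circ> snd)" unfolding XI_def
      using continuous_map_snd \<alpha>c by (rule continuous_map_compose)
    have c2: "continuous_map XI Y (f k \<circ> fst)" unfolding XI_def
      using continuous_map_fst fc[rule_format, of k] by (rule continuous_map_compose)
    show "continuous_map (subtopology (subtopology XI A) (T b)) Y (if b then \<alpha> k \<circ> snd else f k \<circ> fst)"
      using c1 c2 by (auto intro: continuous_map_from_subtopology)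
  next
    fix i j x assume "i \<in> {True, False}" "j \<in> {True, False}"
      "x \<in> topspace (subtopology XI A) \<inter> T i \<inter> T j"
    then show "(if i then \<alpha> k \<circ> snd else f k \<circ> fst) x = (if j then \<alpha> k \<circ> snd else f k \<circ> fst) x"
      by (auto simp: T_def \<alpha>0)
  next
    fix x assume "x \<in> topspace (subtopology XI A)"
    then have "x \<in> A" by simp
    then show "\<exists>j. j \<in> {True, False} \<and> x \<in> T j \<and> F k x = (if j then \<alpha> k \<circ> snd else f k \<circ> fst) x"
    proof (cases "fst x = x0")
      case True
      with \<open>x \<in> A\<close> have "x \<in> T True" unfolding A_def T_def by (cases x) auto
      then show ?thesis using True by (intro exI[of _ True]) (simp add: F_def)
    next
      case False
      with \<open>x \<in> A\<close> have "x \<in> T False" unfolding A_def T_def by (cases x) auto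
      then show ?thesis using False by (intro exI[of _ False]) (simp add: F_def)
    qed
  qed
  have FA: "F k z \<in> f k ` topspace X \<union> \<alpha> k ` {0..1}" if "z \<in> A" for k z
    using that by (auto simp: A_def F_def)
  define G where "G = (\<lambda>k. F k \<circ> r)"
  define g where "g = (\<lambda>k x. G k (x, 1::real))"
  have Gc: "continuous_map XI Y (G k)" for k
    unfolding G_def using rc Fc by (rule continuous_map_compose)
  have G0: "G k (x, 0) = f k x" if "x \<in> topspace X" for k x
    using that r0[OF that] r0[OF x0X] by (simp add: G_def F_def \<alpha>0)
  have G1: "G k (x, 1) = g k x" for k x by (simp add: g_def)
  have GA: "G k z \<in> f k ` topspace X \<union> \<alpha> k ` {0..1}" if "z \<in> topspace XI" for k z
    using FA rA that by (simp add: G_def)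
  have gx0: "g k x0 = y0" for k
    by (simp add: g_def G_def rx0 F_def \<alpha>1)
  have gc: "continuous_map X Y (g k)" for k
  proof -
    have "continuous_map X XI (\<lambda>x. (x, 1::real))" unfolding XI_def
      by (auto simp: continuous_map_pairwise o_def I_def)
    then have "continuous_map X Y (G k \<circ> (\<lambda>x. (x, 1::real)))" using Gc by (rule continuous_map_compose)
    then show ?thesis by (simp add: g_def o_def)
  qed
  have Gconv: "eventually (\<lambda>k. G k ` topspace XI \<subseteq> U) sequentially"
    if U: "openin Y U" "y0 \<in> U" for U
  proof -
    have "eventually (\<lambda>k. f k ` topspace X \<subseteq> U) sequentially"
      using fconv U unfolding map_seq_converges_def by blast
    moreover have "eventually (\<lambda>k. \<alpha> k ` {0..1} \<subseteq> U) sequentially" using \<alpha>conv U by blast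
    ultimately show ?thesis
    proof (rule eventually_elim2)
      fix k assume a: "f k ` topspace X \<subseteq> U" "\<alpha> k ` {0..1} \<subseteq> U"
      show "G k ` topspace XI \<subseteq> U"
      proof (rule image_subsetI)
        fix z assume "z \<in> topspace XI"
        then have "G k z \<in> f k ` topspace X \<union> \<alpha> k ` {0..1}" by (rule GA)
        then show "G k z \<in> U" using a by blast
      qed
    qed
  qed
  show ?thesis
  proof (intro exI[of _ g] conjI allI)
    fix k show "g k \<in> based_maps X x0 Y y0" using gc gx0 by (simp add: based_maps_def)
  next
    show "map_seq_converges X Y g y0" unfolding map_seq_converges_def
    proof (intro allI impI)
      fix U assume "openin Y U \<and> y0 \<in> U"
      then have "eventually (\<lambda>k. G k ` topspace XI \<subseteq> U) sequentially" using Gconv by blast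
      then show "eventually (\<lambda>k. g k ` topspace X \<subseteq> U) sequentially"
        by (rule eventually_mono) (auto simp: g_def tsXI)
    qed
  next
    show "seq_homotopic X Y f g y0" unfolding seq_homotopic_def
    proof (intro exI[of _ G] conjI allI ballI)
      fix k show "continuous_map (prod_topology X (top_of_set {0..(1::real)})) Y (G k)"
        using Gc by (simp add: XI_def I_def)
    next
      fix k x assume "x \<in> topspace X"
      then show "G k (x, 0) = f k x" "G k (x, 1) = g k x" using G0 G1 by auto
    next
      show "map_seq_converges (prod_topology X (top_of_set {0..(1::real)})) Y G y0"
        using Gconv unfolding map_seq_converges_def XI_def I_def by blast
    qed
  qed
qed

end
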